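(* Suppose $F_L$ is supported on $[0,\bar L)$ and $F_H$ is supported on $[\underline H,\infty)$, with $\bar L<\underline H$. Suppose $\alpha_i=1$ for at least two agents $i$. Let $r_L<r_H$. Then for every $\rho\in(\bar L,\underline H)$, the threshold mechanism ${\cal M}(\rho,r_L,r_H)$ is incentive compatible. That is, for each agent $i$, each type $s$ and each $v_i$ in the support of $F_s$, the truthful strategy of agent $i$ is a best response when all other agents bid truthfully.
   Context: Setting: a seller sells $T>1$ items, one per round $t=1,\dots,T$, to $n$ agents. All items share a type $s\in\{L,H\}$, which has prior probabilities $p_L,p_H$. The type $s$ is known to the agents but not to the seller. Conditional on $s$, agent $i$'s valuation $v_i$ is drawn independently from $F_s$ and is the same in all rounds. In each round, agent $i$ participates independently with probability $\alpha_i$ and learns this at the start of the round. $T$, $p_L$, $p_H$ and the $\alpha_i$ are common knowledge. Each agent knows only its own valuation. Each round runs a second price auction with reserve $r_t$ among the participants: if all bids are below $r_t$ there is no sale; otherwise a highest bidder (ties broken uniformly at random) wins and pays the maximum of $r_t$ and the highest other bid. A bidding strategy for agent $i$ maps $v_i$, the agent's own observed history (past reserves, own participation, bids, allocations, payments) and the current reserve to a bid. Agent $i$'s utility is $\mathbb{E}[\sum_t (v_iq_{it}-p_{it})]$. The truthful strategy bids $v_i$ whenever participating. A best response maximizes this utility given the others' strategies. The threshold mechanism ${\cal M}(\rho,r_L,r_H)$ works as follows. The reserve is $r_L$ in round 1 and stays $r_L$ until some agent bids above $\rho$ in some round. In all rounds after that, the reserve is $r_H$. If no bid ever exceeds $\rho$,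 the reserve stays $r_L$ until round $T$. *)

theory Defs
  imports "HOL-Probability.Probability"
begin

datatype itype = L | H

text \<open>What agent i observes about one round: the reserve, whether it
participated, its own bid (None if absent), whether it was allocated the item,
and its payment.\<close>
datatype obs = Obs (obs_reserve: real) (obs_part: bool) (obs_bid: "real option")
                   (obs_won: bool) (obs_pay: real)

text \<open>A bidding strategy of an agent: own valuation, own observed history
(chronological list of past rounds), current reserve \<mapsto> bid.\<close>
type_synonym strategy = "real \<Rightarrow> obs list \<Rightarrow> real \<Rightarrow> real"

definition truthful :: strategy where
  "truthful = (\<lambda>v h r. v)"

definition support_of :: "real measure \<Rightarrow> real set" where
  "support_of M = {x. \<forall>e>0. emeasure M (ball x e) > 0}"

definition part_pmf :: "nat \<Rightarrow> (nat \<Rightarrow> real) \<Rightarrow> (nat \<Rightarrow> bool) pmf" where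
  "part_pmf n \<alpha> = Pi_pmf {..<n} False (\<lambda>j. bernoulli_pmf (\<alpha> j))"

text \<open>Second price auction with reserve r; bids b j = None means agent j does
not participate.\<close>
definition bidders :: "nat \<Rightarrow> (nat \<Rightarrow> real option) \<Rightarrow> nat set" where
  "bidders n b = {j. j < n \<and> b j \<noteq> None}"

definition winners :: "nat \<Rightarrow> real \<Rightarrow> (nat \<Rightarrow> real option) \<Rightarrow> nat set" where
  "winners n r b = {j \<in> bidders n b. r \<le> the (b j) \<and>
                      (\<forall>k \<in> bidders n b. the (b k) \<le> the (b j))}"

text \<open>Winner (None = no sale); ties broken uniformly at random.\<close>
definition winner_pmf :: "nat \<Rightarrow> real \<Rightarrow> (nat \<Rightarrow> real option) \<Rightarrow> nat option pmf" where
  "winner_pmf n r b = (if winners n r b = {} then return_pmf None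
                       else map_pmf Some (pmf_of_set (winners n r b)))"

definition price :: "nat \<Rightarrow> real \<Rightarrow> (nat \<Rightarrow> real option) \<Rightarrow> nat \<Rightarrow> real" where
  "price n r b w = Max (insert r {the (b k) | k. k \<in> bidders n b \<and> k \<noteq> w})"

definition above :: "nat \<Rightarrow> real \<Rightarrow> (nat \<Rightarrow> real option) \<Rightarrow> bool" where
  "above n \<rho> b = (\<exists>j \<in> bidders n b. the (b j) > \<rho>)"

text \<open>Play of the remaining k rounds of the threshold mechanism M(rho, rL, rH).
Agent i uses strategy sigma and has valuation v; every other agent j bids
truthfully its valuation w j.  flag records whether some bid has exceeded rho
in an earlier round; h is agent i's observed history.  The result is the
distribution of agent i's total utility over the remaining rounds.\<close>
primrec play :: "nat \<Rightarrow> (nat \<Rightarrow> real) \<Rightarrow> real \<Rightarrow> real \<Rightarrow> real \<Rightarrow> nat \<Rightarrow> real \<Rightarrow>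
                 strategy \<Rightarrow> (nat \<Rightarrow> real) \<Rightarrow> nat \<Rightarrow> bool \<Rightarrow> obs list \<Rightarrow> real pmf" where
  "play n \<alpha> \<rho> rL rH i v \<sigma> w 0 flag h = return_pmf 0"
| "play n \<alpha> \<rho> rL rH i v \<sigma> w (Suc k) flag h =
     bind_pmf (part_pmf n \<alpha>) (\<lambda>P.
       let r = (if flag then rH else rL);
           b = (\<lambda>j. if P j then Some (if j = i then \<sigma> v h r else w j) else None)
       in bind_pmf (winner_pmf n r b) (\<lambda>win.
            let q = (win = Some i);
                pay = (if q then price n r b i else 0);
                ob = Obs r (P i) (b i) q pay
            in map_pmf (\<lambda>u. (if q then v else 0) - pay + u)
                 (play n \<alpha> \<rho> rL rH i v \<sigma> w k (flag \<or> above n \<rho> b) (h @ [ob]))))"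

definition exp_util ::
  "nat \<Rightarrow> (nat \<Rightarrow> real) \<Rightarrow> (itype \<Rightarrow> real measure) \<Rightarrow> itype \<Rightarrow> nat \<Rightarrow>
   real \<Rightarrow> real \<Rightarrow> real \<Rightarrow> nat \<Rightarrow> real \<Rightarrow> strategy \<Rightarrow> real" where
  "exp_util n \<alpha> F s T \<rho> rL rH i v \<sigma> =
     (\<integral>w. measure_pmf.expectation (play n \<alpha> \<rho> rL rH i v \<sigma> w T False []) (\<lambda>u. u)
        \<partial>(PiM ({..<n} - {i}) (\<lambda>_. F s)))"

definition best_response ::
  "nat \<Rightarrow> (nat \<Rightarrow> real) \<Rightarrow> (itype \<Rightarrow> real measure) \<Rightarrow> itype \<Rightarrow> nat \<Rightarrow>
   real \<Rightarrow> real \<Rightarrow> real \<Rightarrow> nat \<Rightarrow> real \<Rightarrow> strategy \<Rightarrow> bool" where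
  "best_response n \<alpha> F s T \<rho> rL rH i v \<sigma> =
     (\<forall>\<sigma>'. exp_util n \<alpha> F s T \<rho> rL rH i v \<sigma>' \<le> exp_util n \<alpha> F s T \<rho> rL rH i v \<sigma>)"

end

theory Submission
  imports Defs
begin


lemma exp_bind_pmf_fin:
  fixes f :: "'b \<Rightarrow> real"
  assumes fM: "finite (set_pmf M)" and fN: "\<And>x. x \<in> set_pmf M \<Longrightarrow> finite (set_pmf (N x))"
  shows "measure_pmf.expectation (bind_pmf M N) f =
         measure_pmf.expectation M (\<lambda>x. measure_pmf.expectation (N x) f)"
proof -
  define S where "S = (\<Union>x\<in>set_pmf M. set_pmf (N x))"
  have fS: "finite S" unfolding S_def using fM fN by (intro finite_UN_I)
  have "measure_pmf.expectation (bind_pmf M N) f = (\<Sum>y\<in>S. f y * pmf (bind_pmf M N) y)"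
    by (rule integral_measure_pmf_real[OF fS]) (auto simp: S_def)
  also have "\<dots> = (\<Sum>y\<in>S. f y * (\<Sum>x\<in>set_pmf M. pmf (N x) y * pmf M x))"
    by (intro sum.cong refl arg_cong2[where f="(*)"], simp add: pmf_bind,
        rule integral_measure_pmf_real) (auto simp: fM)
  also have "\<dots> = (\<Sum>x\<in>set_pmf M. (\<Sum>y\<in>S. f y * pmf (N x) y) * pmf M x)"
    by (simp add: sum_distrib_left sum_distrib_right mult.assoc sum.swap[of _ S])
  also have "\<dots> = (\<Sum>x\<in>set_pmf M. measure_pmf.expectation (N x) f * pmf M x)"
    by (intro sum.cong refl arg_cong2[where f="(*)"], rule integral_measure_pmf_real[symmetric])
       (use fS in \<open>auto simp: S_def\<close>)
  also have "\<dots> = measure_pmf.expectation M (\<lambda>x. measure_pmf.expectation (N x) f)"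
    by (rule integral_measure_pmf_real[symmetric]) (auto simp: fM)
  finally show ?thesis .
qed

lemma fin_part: "finite (set_pmf (part_pmf n \<alpha>))"
  unfolding part_pmf_def by (subst set_Pi_pmf) (auto intro!: finite_PiE_dflt)

lemma fin_winners: "finite (winners n r b)"
  by (rule finite_subset[of _ "{..<n}"]) (auto simp: winners_def bidders_def)

lemma fin_winner: "finite (set_pmf (winner_pmf n r b))"
  unfolding winner_pmf_def using fin_winners by auto

lemma fin_play: "finite (set_pmf (play n \<alpha> \<rho> rL rH i v \<sigma> w k f h))"
proof (induction k arbitrary: f h)
  case 0 then show ?case by simp
next
  case (Suc k)
  show ?case
    by (simp add: Let_def fin_part fin_winner Suc)
qed

lemma fin_bind: "finite (set_pmf M) \<Longrightarrow> (\<And>x. x \<in> set_pmf M \<Longrightarrow> finite (set_pmf (N x))) \<Longrightarrow> finite (set_pmf (bind_pmf M N))"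
  by (simp add: set_bind_pmf)

lemma E_play_Suc:
  "measure_pmf.expectation (play n \<alpha> \<rho> rL rH i v \<sigma> w (Suc k) f h) (\<lambda>u. u) =
   measure_pmf.expectation (part_pmf n \<alpha>) (\<lambda>P.
     let r = (if f then rH else rL);
         b = (\<lambda>j. if P j then Some (if j = i then \<sigma> v h r else w j) else None)
     in measure_pmf.expectation (winner_pmf n r b) (\<lambda>win.
         ((if win = Some i then v else 0) - (if win = Some i then price n r b i else 0)) +
         measure_pmf.expectation (play n \<alpha> \<rho> rL rH i v \<sigma> w k (f \<or> above n \<rho> b)
            (h @ [Obs r (P i) (b i) (win = Some i) (if win = Some i then price n r b i else 0)])) (\<lambda>u. u)))"
  apply (simp only: play.simps Let_def)
  apply (simp only: exp_bind_pmf_fin fin_part fin_winner fin_play set_map_pmf finite_imageI fin_bind integral_map_pmf)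
  apply (subst Bochner_Integration.integral_add)
    apply (simp_all add: integrable_measure_pmf_finite fin_play)

  done


lemma pmf_winner_Some:
  "pmf (winner_pmf n r b) (Some j) = (if j \<in> winners n r b then 1 / real (card (winners n r b)) else 0)"
proof (cases "winners n r b = {}")
  case True then show ?thesis by (simp add: winner_pmf_def)
next
  case False
  then have "pmf (winner_pmf n r b) (Some j) = pmf (pmf_of_set (winners n r b)) j"
    by (simp add: winner_pmf_def pmf_map_inj')
  also have "\<dots> = (if j \<in> winners n r b then 1 / real (card (winners n r b)) else 0)"
    using False fin_winners by (simp add: indicator_def)
  finally show ?thesis .
qed

lemma E_indicator_Some:
  fixes c :: real
  shows "measure_pmf.expectation M (\<lambda>win. if win = Some j then c else 0) = pmf M (Some j) * c"
  by (subst integral_measure_pmf_real[where A="{Some j}"]) (auto split: if_splits)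

locale ctx =
  fixes n :: nat and \<alpha> :: "nat \<Rightarrow> real" and \<rho> rL rH :: real and i :: nat and v :: real
  assumes i_lt: "i < n"
begin

definition bx :: "real \<Rightarrow> (nat \<Rightarrow> bool) \<Rightarrow> (nat \<Rightarrow> real) \<Rightarrow> nat \<Rightarrow> real option" where
  "bx x P w = (\<lambda>j. if P j then Some (if j = i then x else w j) else None)"

definition Kset :: "(nat \<Rightarrow> bool) \<Rightarrow> nat set" where
  "Kset P = {k. k < n \<and> P k \<and> k \<noteq> i}"

definition Mp :: "real \<Rightarrow> (nat \<Rightarrow> bool) \<Rightarrow> (nat \<Rightarrow> real) \<Rightarrow> real" where
  "Mp r P w = Max (insert r ((\<lambda>k. w k) ` Kset P))"

definition gtr :: "real \<Rightarrow> (nat \<Rightarrow> bool) \<Rightarrow> (nat \<Rightarrow> real) \<Rightarrow> real" where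
  "gtr r P w = (if P i then max 0 (v - Mp r P w) else 0)"

lemma fin_Kset: "finite (Kset P)"
  by (rule finite_subset[of _ "{..<n}"]) (auto simp: Kset_def)

lemma price_bx: "price n r (bx x P w) i = Mp r P w"
proof -
  have "{the (bx x P w k) |k. k \<in> bidders n (bx x P w) \<and> k \<noteq> i} = (\<lambda>k. w k) ` Kset P"
    by (auto simp: bx_def bidders_def Kset_def)
  then show ?thesis by (simp add: price_def Mp_def)
qed

lemma Mp_ge_r: "r \<le> Mp r P w"
  unfolding Mp_def by (rule Max_ge) (auto simp: fin_Kset)

lemma Mp_ge_w: "k \<in> Kset P \<Longrightarrow> w k \<le> Mp r P w"
  unfolding Mp_def by (rule Max_ge) (auto simp: fin_Kset)

lemma Mp_mono: "r \<le> r' \<Longrightarrow> Mp r P w \<le> Mp r' P w"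
  unfolding Mp_def
  by (rule Max.boundedI) (auto simp: fin_Kset intro: order.trans[OF _ Max_ge])

lemma gtr_mono: "r \<le> r' \<Longrightarrow> gtr r' P w \<le> gtr r P w"
  using Mp_mono[of r r' P w] by (auto simp: gtr_def)

lemma gtr_nonneg: "0 \<le> gtr r P w"
  by (auto simp: gtr_def)

lemma gtr_le: "gtr r P w \<le> \<bar>v\<bar> + \<bar>r\<bar>"
  using Mp_ge_r[of r P w] by (auto simp: gtr_def)

lemma E_util:
  "measure_pmf.expectation (winner_pmf n r (bx x P w))
     (\<lambda>win. (if win = Some i then v else 0) - (if win = Some i then price n r (bx x P w) i else 0))
   = pmf (winner_pmf n r (bx x P w)) (Some i) * (v - Mp r P w)"
proof -
  have "(\<lambda>win. (if win = Some i then v else 0) - (if win = Some i then price n r (bx x P w) i else 0))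
        = (\<lambda>win. if win = Some i then v - Mp r P w else 0)"
    by (auto simp: price_bx)
  then show ?thesis by (simp add: E_indicator_Some)
qed

lemma one_round_le:
  "measure_pmf.expectation (winner_pmf n r (bx x P w))
     (\<lambda>win. (if win = Some i then v else 0) - (if win = Some i then price n r (bx x P w) i else 0))
   \<le> gtr r P w"
proof -
  let ?W = "winners n r (bx x P w)"
  let ?p = "pmf (winner_pmf n r (bx x P w)) (Some i)"
  have p0: "0 \<le> ?p" and p1: "?p \<le> 1" by (auto simp: pmf_le_1)
  show ?thesis
  proof (cases "P i")
    case False
    then have "i \<notin> ?W" by (auto simp: winners_def bidders_def bx_def)
    then show ?thesis using False by (simp add: E_util pmf_winner_Some gtr_def)
  next
    case True
    have "?p * (v - Mp r P w) \<le> max 0 (v - Mp r P w)"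
    proof (cases "v - Mp r P w \<ge> 0")
      case True
      then show ?thesis using p1 p0 by (simp add: mult_left_le_one_le)
    next
      case False
      then show ?thesis using p0 by (simp add: mult_nonneg_nonpos)
    qed
    then show ?thesis using True by (simp add: E_util gtr_def)
  qed
qed

lemma one_round_eq:
  "measure_pmf.expectation (winner_pmf n r (bx v P w))
     (\<lambda>win. (if win = Some i then v else 0) - (if win = Some i then price n r (bx v P w) i else 0))
   = gtr r P w"
proof -
  let ?W = "winners n r (bx v P w)"
  let ?p = "pmf (winner_pmf n r (bx v P w)) (Some i)"
  show ?thesis
  proof (cases "P i")
    case False
    then have "i \<notin> ?W" by (auto simp: winners_def bidders_def bx_def)
    then show ?thesis using False by (simp add: E_util pmf_winner_Some gtr_def)
  next
    case Pi: True
    show ?thesis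
    proof (cases "v > Mp r P w")
      case True
      have "?W = {i}"
      proof (intro equalityI subsetI)
        fix j assume j: "j \<in> ?W"
        show "j \<in> {i}"
        proof (rule ccontr)
          assume "j \<notin> {i}"
          then have ji: "j \<noteq> i" by simp
          from j have jb: "j \<in> bidders n (bx v P w)" and
            le: "the (bx v P w i) \<le> the (bx v P w j)"
            using Pi i_lt by (auto simp: winners_def bidders_def bx_def)
          from jb ji have "j \<in> Kset P" by (auto simp: bidders_def bx_def Kset_def split: if_splits)
          then have "w j \<le> Mp r P w" by (rule Mp_ge_w)
          moreover from le ji Pi jb have "v \<le> w j" by (auto simp: bx_def bidders_def split: if_splits)
          ultimately show False using True by simp
        qed
      next
        fix j assume "j \<in> {i}"
        then have ji: "j = i" by simp
        have "r \<le> v" using Mp_ge_r[of r P w] True by simp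
        moreover have "the (bx v P w k) \<le> v" if "k \<in> bidders n (bx v P w)" for k
        proof (cases "k = i")
          case True then show ?thesis using that by (auto simp: bx_def bidders_def split: if_splits)
        next
          case False
          then have "k \<in> Kset P" using that by (auto simp: bidders_def bx_def Kset_def split: if_splits)
          then have "w k \<le> Mp r P w" by (rule Mp_ge_w)
          then show ?thesis using False \<open>v > Mp r P w\<close> that
            by (auto simp: bx_def bidders_def split: if_splits)
        qed
        ultimately show "j \<in> ?W" using ji Pi i_lt by (auto simp: winners_def bidders_def bx_def)
      qed
      then show ?thesis using Pi True by (simp add: E_util pmf_winner_Some gtr_def)
    next
      case False
      show ?thesis
      proof (cases "i \<in> ?W")
        case True
        have "Mp r P w \<le> v"
          unfolding Mp_def
        proof (rule Max.boundedI)
          show "finite (insert r ((\<lambda>k. w k) ` Kset P))" by (simp add: fin_Kset)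
          show "insert r ((\<lambda>k. w k) ` Kset P) \<noteq> {}" by simp
          fix a assume "a \<in> insert r ((\<lambda>k. w k) ` Kset P)"
          then show "a \<le> v"
          proof
            assume "a = r" then show ?thesis using True Pi by (simp add: winners_def bx_def)
          next
            assume "a \<in> (\<lambda>k. w k) ` Kset P"
            then obtain k where k: "k \<in> Kset P" "a = w k" by auto
            then have "k \<in> bidders n (bx v P w)" by (auto simp: Kset_def bidders_def bx_def)
            then have "the (bx v P w k) \<le> the (bx v P w i)" using True by (simp add: winners_def)
            then show ?thesis using k Pi by (auto simp: bx_def Kset_def)
          qed
        qed
        then have "v - Mp r P w = 0" using False by simp
        then show ?thesis using Pi by (simp only: E_util gtr_def) simp
      next
        case nW: False
        have "v \<le> Mp r P w" using \<open>\<not> v > Mp r P w\<close> by simp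
        then show ?thesis using Pi nW by (simp add: E_util pmf_winner_Some gtr_def)
      qed
    qed
  qed
qed

end



lemma E_add_const:
  fixes g :: "'a \<Rightarrow> real"
  assumes "finite (set_pmf M)"
  shows "measure_pmf.expectation M (\<lambda>x. g x + c) = measure_pmf.expectation M g + c"
  using assms by (subst Bochner_Integration.integral_add) (auto simp: integrable_measure_pmf_finite)

context ctx begin

primrec TV :: "nat \<Rightarrow> bool \<Rightarrow> (nat \<Rightarrow> real) \<Rightarrow> real" where
  "TV 0 f w = 0"
| "TV (Suc k) f w = measure_pmf.expectation (part_pmf n \<alpha>)
     (\<lambda>P. gtr (if f then rH else rL) P w + TV k (f \<or> above n \<rho> (bx v P w)) w)"

definition util :: "real \<Rightarrow> (nat \<Rightarrow> real option) \<Rightarrow> nat option \<Rightarrow> real" where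
  "util r b = (\<lambda>win. (if win = Some i then v else 0) - (if win = Some i then price n r b i else 0))"

definition obs_of :: "real \<Rightarrow> real \<Rightarrow> (nat \<Rightarrow> bool) \<Rightarrow> (nat \<Rightarrow> real) \<Rightarrow> nat option \<Rightarrow> obs" where
  "obs_of r x P w win = Obs r (P i) (bx x P w i) (win = Some i)
      (if win = Some i then price n r (bx x P w) i else 0)"

lemma E_play_Suc':
  assumes "r = (if f then rH else rL)" "x = \<sigma> v h r"
  shows "measure_pmf.expectation (play n \<alpha> \<rho> rL rH i v \<sigma> w (Suc k) f h) (\<lambda>u. u) =
   measure_pmf.expectation (part_pmf n \<alpha>) (\<lambda>P.
     measure_pmf.expectation (winner_pmf n r (bx x P w)) (\<lambda>win.
       util r (bx x P w) win +
       measure_pmf.expectation (play n \<alpha> \<rho> rL rH i v \<sigma> w k (f \<or> above n \<rho> (bx x P w))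
            (h @ [obs_of r x P w win])) (\<lambda>u. u)))"
  using assms by (simp only: E_play_Suc Let_def bx_def util_def obs_of_def)

lemma tr_eq: "measure_pmf.expectation (play n \<alpha> \<rho> rL rH i v truthful w k f h) (\<lambda>u. u) = TV k f w"
proof (induction k arbitrary: f h)
  case 0 then show ?case by simp
next
  case (Suc k)
  define r where "r = (if f then rH else rL)"
  have "measure_pmf.expectation (play n \<alpha> \<rho> rL rH i v truthful w (Suc k) f h) (\<lambda>u. u) =
     measure_pmf.expectation (part_pmf n \<alpha>) (\<lambda>P.
     measure_pmf.expectation (winner_pmf n r (bx v P w)) (\<lambda>win.
       util r (bx v P w) win + TV k (f \<or> above n \<rho> (bx v P w)) w))"
    by (subst E_play_Suc'[OF r_def, where x=v]) (simp add: truthful_def, simp only: Suc.IH)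
  also have "\<dots> = measure_pmf.expectation (part_pmf n \<alpha>) (\<lambda>P.
       gtr r P w + TV k (f \<or> above n \<rho> (bx v P w)) w)"
    by (simp only: E_add_const fin_winner) (simp only: util_def one_round_eq)
  also have "\<dots> = TV (Suc k) f w" by (simp add: r_def)
  finally show ?case .
qed

lemma main_le:
  assumes mono: "\<And>k f P x. P \<in> set_pmf (part_pmf n \<alpha>) \<Longrightarrow>
      TV k (f \<or> above n \<rho> (bx x P w)) w \<le> TV k (f \<or> above n \<rho> (bx v P w)) w"
  shows "measure_pmf.expectation (play n \<alpha> \<rho> rL rH i v \<sigma> w k f h) (\<lambda>u. u) \<le> TV k f w"
proof (induction k arbitrary: f h)
  case 0 then show ?case by simp
next
  case (Suc k)
  define r where "r = (if f then rH else rL)"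
  define x where "x = \<sigma> v h r"
  have "measure_pmf.expectation (play n \<alpha> \<rho> rL rH i v \<sigma> w (Suc k) f h) (\<lambda>u. u) =
   measure_pmf.expectation (part_pmf n \<alpha>) (\<lambda>P.
     measure_pmf.expectation (winner_pmf n r (bx x P w)) (\<lambda>win.
       util r (bx x P w) win +
       measure_pmf.expectation (play n \<alpha> \<rho> rL rH i v \<sigma> w k (f \<or> above n \<rho> (bx x P w))
            (h @ [obs_of r x P w win])) (\<lambda>u. u)))"
    by (rule E_play_Suc'[where \<sigma>=\<sigma> and h=h and f=f and k=k, OF r_def x_def])
  also have "\<dots> \<le> measure_pmf.expectation (part_pmf n \<alpha>) (\<lambda>P.
       gtr r P w + TV k (f \<or> above n \<rho> (bx v P w)) w)"
  proof (rule integral_mono_AE)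
    show "integrable (measure_pmf (part_pmf n \<alpha>)) (\<lambda>P.
     measure_pmf.expectation (winner_pmf n r (bx x P w)) (\<lambda>win.
       util r (bx x P w) win +
       measure_pmf.expectation (play n \<alpha> \<rho> rL rH i v \<sigma> w k (f \<or> above n \<rho> (bx x P w))
            (h @ [obs_of r x P w win])) (\<lambda>u. u)))"
      by (rule integrable_measure_pmf_finite[OF fin_part])
    show "integrable (measure_pmf (part_pmf n \<alpha>)) (\<lambda>P.
       gtr r P w + TV k (f \<or> above n \<rho> (bx v P w)) w)"
      by (rule integrable_measure_pmf_finite[OF fin_part])
    show "AE P in measure_pmf (part_pmf n \<alpha>).
     measure_pmf.expectation (winner_pmf n r (bx x P w)) (\<lambda>win.
       util r (bx x P w) win +
       measure_pmf.expectation (play n \<alpha> \<rho> rL rH i v \<sigma> w k (f \<or> above n \<rho> (bx x P w))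
            (h @ [obs_of r x P w win])) (\<lambda>u. u))
     \<le> gtr r P w + TV k (f \<or> above n \<rho> (bx v P w)) w"
    proof (rule AE_pmfI)
      fix P assume P: "P \<in> set_pmf (part_pmf n \<alpha>)"
      have "measure_pmf.expectation (winner_pmf n r (bx x P w)) (\<lambda>win.
       util r (bx x P w) win +
       measure_pmf.expectation (play n \<alpha> \<rho> rL rH i v \<sigma> w k (f \<or> above n \<rho> (bx x P w))
            (h @ [obs_of r x P w win])) (\<lambda>u. u))
         \<le> measure_pmf.expectation (winner_pmf n r (bx x P w)) (\<lambda>win.
       util r (bx x P w) win + TV k (f \<or> above n \<rho> (bx x P w)) w)"
        by (intro integral_mono integrable_measure_pmf_finite fin_winner add_left_mono Suc.IH)
      also have "\<dots> = measure_pmf.expectation (winner_pmf n r (bx x P w)) (util r (bx x P w))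
          + TV k (f \<or> above n \<rho> (bx x P w)) w"
        by (simp only: E_add_const fin_winner)
      also have "\<dots> \<le> gtr r P w + TV k (f \<or> above n \<rho> (bx v P w)) w"
        by (intro add_mono mono[OF P]) (simp only: util_def one_round_le)
      finally show "measure_pmf.expectation (winner_pmf n r (bx x P w)) (\<lambda>win.
       util r (bx x P w) win +
       measure_pmf.expectation (play n \<alpha> \<rho> rL rH i v \<sigma> w k (f \<or> above n \<rho> (bx x P w))
            (h @ [obs_of r x P w win])) (\<lambda>u. u))
     \<le> gtr r P w + TV k (f \<or> above n \<rho> (bx v P w)) w" .
    qed
  qed
  also have "\<dots> = TV (Suc k) f w" by (simp add: r_def)
  finally show ?case .
qed

lemma above_tr_L:
  assumes "v \<le> \<rho>" "\<forall>j<n. j \<noteq> i \<longrightarrow> w j \<le> \<rho>"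
  shows "\<not> above n \<rho> (bx v P w)"
  using assms by (auto simp: above_def bidders_def bx_def split: if_splits)

lemma TV_True_le_False:
  assumes "v \<le> \<rho>" "\<forall>j<n. j \<noteq> i \<longrightarrow> w j \<le> \<rho>" "rL \<le> rH"
  shows "TV k True w \<le> TV k False w"
proof (induction k)
  case 0 then show ?case by simp
next
  case (Suc k)
  have "TV (Suc k) True w = measure_pmf.expectation (part_pmf n \<alpha>) (\<lambda>P. gtr rH P w + TV k True w)"
    by simp
  also have "\<dots> \<le> measure_pmf.expectation (part_pmf n \<alpha>) (\<lambda>P. gtr rL P w + TV k False w)"
    by (intro integral_mono integrable_measure_pmf_finite fin_part add_mono gtr_mono assms(3) Suc.IH)
  also have "\<dots> = TV (Suc k) False w"
    using above_tr_L[OF assms(1,2)] by simp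
  finally show ?case .
qed

lemma mono_L:
  assumes "v \<le> \<rho>" "\<forall>j<n. j \<noteq> i \<longrightarrow> w j \<le> \<rho>" "rL \<le> rH"
  shows "TV k (f \<or> above n \<rho> (bx x P w)) w \<le> TV k (f \<or> above n \<rho> (bx v P w)) w"
  using TV_True_le_False[OF assms] above_tr_L[OF assms(1,2)]
  by (cases f; cases "above n \<rho> (bx x P w)") auto

lemma part_forced:
  assumes "P \<in> set_pmf (part_pmf n \<alpha>)" "j0 < n" "\<alpha> j0 = 1"
  shows "P j0"
proof -
  have "P \<in> PiE_dflt {..<n} False (set_pmf \<circ> (\<lambda>j. bernoulli_pmf (\<alpha> j)))"
    using assms(1) unfolding part_pmf_def by (simp add: set_Pi_pmf)
  then have "P j0 \<in> set_pmf (bernoulli_pmf 1)"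
    using assms(2,3) by (auto simp: PiE_dflt_def)
  then show ?thesis by (cases "P j0") (auto simp: set_pmf_iff)
qed

lemma mono_H:
  assumes "j0 < n" "j0 \<noteq> i" "\<alpha> j0 = 1" "w j0 > \<rho>" "P \<in> set_pmf (part_pmf n \<alpha>)"
  shows "TV k (f \<or> above n \<rho> (bx x P w)) w \<le> TV k (f \<or> above n \<rho> (bx v P w)) w"
proof -
  have Pj: "P j0" by (rule part_forced[OF assms(5,1,3)])
  have "above n \<rho> (bx y P w)" for y
    unfolding above_def bidders_def bx_def using Pj assms by (intro bexI[of _ j0]) auto
  then show ?thesis by simp
qed

end


context ctx begin

lemma gtr_le': "gtr (if f then rH else rL) P w \<le> \<bar>v\<bar> + \<bar>rL\<bar> + \<bar>rH\<bar>"
  using gtr_le[of "if f then rH else rL" P w] by (cases f) auto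

lemma TV_bounds: "0 \<le> TV k f w \<and> TV k f w \<le> real k * (\<bar>v\<bar> + \<bar>rL\<bar> + \<bar>rH\<bar>)"
proof (induction k arbitrary: f)
  case 0 then show ?case by simp
next
  case (Suc k)
  let ?B = "\<bar>v\<bar> + \<bar>rL\<bar> + \<bar>rH\<bar>"
  have "0 \<le> TV (Suc k) f w"
    using Suc.IH gtr_nonneg by (simp add: integral_nonneg_AE add_nonneg_nonneg)
  moreover have "TV (Suc k) f w \<le> measure_pmf.expectation (part_pmf n \<alpha>) (\<lambda>P. ?B + real k * ?B)"
    unfolding TV.simps
    by (intro integral_mono integrable_measure_pmf_finite fin_part add_mono gtr_le')
       (use Suc.IH in blast)
  moreover have "measure_pmf.expectation (part_pmf n \<alpha>) (\<lambda>P. ?B + real k * ?B) = real (Suc k) * ?B"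
    by (simp add: algebra_simps)
  ultimately show ?case by simp
qed

lemma above_eq: "above n \<rho> (bx v P w) = ((P i \<and> \<rho> < v) \<or> (\<exists>j\<in>Kset P. \<rho> < w j))"
  using i_lt by (auto simp: above_def bidders_def bx_def Kset_def split: if_splits)

lemma Max_meas:
  assumes comp: "\<And>j. j < n \<Longrightarrow> j \<noteq> i \<Longrightarrow> (\<lambda>w. w j) \<in> borel_measurable M"
  shows "finite K \<Longrightarrow> K \<subseteq> {j. j < n \<and> j \<noteq> i} \<Longrightarrow>
    (\<lambda>w. Max (insert (r::real) ((\<lambda>k. w k) ` K))) \<in> borel_measurable M"
proof (induction K rule: finite_induct)
  case empty then show ?case by simp
next
  case (insert a K)
  have eq: "(\<lambda>w. Max (insert r ((\<lambda>k. w k) ` insert a K))) = (\<lambda>w. max (w a) (Max (insert r ((\<lambda>k. w k) ` K))))"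
    using insert.hyps by (intro ext) (cases "K = {}"; simp add: Max_insert insert_commute max.left_commute max.commute)
  have m1: "(\<lambda>w. Max (insert r ((\<lambda>k. w k) ` K))) \<in> borel_measurable M"
    using insert by auto
  have m2: "(\<lambda>w. w a) \<in> borel_measurable M"
    using insert comp by auto
  show ?case unfolding eq by (rule borel_measurable_max[OF m1 m2])
qed

lemma TV_or: "TV k (f \<or> X) w = (if X then TV k True w else TV k f w)"
  by (cases X) auto

lemma TV_meas:
  assumes comp: "\<And>j. j < n \<Longrightarrow> j \<noteq> i \<Longrightarrow> (\<lambda>w. w j) \<in> borel_measurable M"
  shows "(\<lambda>w. TV k f w) \<in> borel_measurable M"
proof (induction k arbitrary: f)
  case 0 then show ?case by simp
next
  case (Suc k)
  have Mp_m: "(\<lambda>w. Mp r P w) \<in> borel_measurable M" for r P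
    unfolding Mp_def by (rule Max_meas[OF comp fin_Kset]) (auto simp: Kset_def)
  have g_m: "(\<lambda>w. gtr r P w) \<in> borel_measurable M" for r P
    unfolding gtr_def using Mp_m by (cases "P i") auto
  have pr: "{w \<in> space M. (P i \<and> \<rho> < v) \<or> (\<exists>j\<in>Kset P. \<rho> < w j)} \<in> sets M" for P
  proof -
    have "{w \<in> space M. (P i \<and> \<rho> < v) \<or> (\<exists>j\<in>Kset P. \<rho> < w j)} =
       (if P i \<and> \<rho> < v then space M else (\<Union>j\<in>Kset P. {w \<in> space M. \<rho> < w j}))"
      by auto
    also have "\<dots> \<in> sets M"
      using fin_Kset comp by (auto simp: Kset_def intro!: sets.finite_UN borel_measurable_less)
    finally show ?thesis .
  qed
  have eq: "TV (Suc k) f w = (\<Sum>P\<in>set_pmf (part_pmf n \<alpha>).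
      (gtr (if f then rH else rL) P w +
       (if (P i \<and> \<rho> < v) \<or> (\<exists>j\<in>Kset P. \<rho> < w j) then TV k True w else TV k f w)) * pmf (part_pmf n \<alpha>) P)" for w
    by (simp only: TV.simps, subst integral_measure_pmf_real[OF fin_part[of n \<alpha>]], simp) (intro sum.cong refl, subst above_eq, subst TV_or, simp)
  show ?case unfolding eq
    by (intro borel_measurable_sum borel_measurable_times borel_measurable_add g_m measurable_If
        Suc.IH pr borel_measurable_const)
qed

end


lemma support_le:
  assumes ps: "prob_space N" and sN: "sets N = sets borel"
    and m: "measure N {0..<Lb} = 1" and vs: "v \<in> support_of N"
  shows "v \<le> Lb"
proof (rule ccontr)
  assume "\<not> v \<le> Lb"
  then have e: "v - Lb > 0" by simp
  interpret prob_space N by (rule ps)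
  have sp: "space N = UNIV" using sets_eq_imp_space_eq[OF sN] by simp
  have A: "{0..<Lb} \<in> events" using sN by simp
  have B: "ball v (v - Lb) \<in> events" using sN by simp
  have sub: "ball v (v - Lb) \<subseteq> space N - {0..<Lb}"
    using sp by (auto simp: dist_real_def)
  have "prob (ball v (v - Lb)) \<le> prob (space N - {0..<Lb})"
    using A B sub by (intro finite_measure_mono) auto
  also have "\<dots> = 0" using prob_compl[OF A] m by simp
  finally have "prob (ball v (v - Lb)) = 0" using measure_nonneg[of N] by (simp add: antisym)
  then have "emeasure N (ball v (v - Lb)) = 0" by (simp add: emeasure_eq_measure)
  moreover have "emeasure N (ball v (v - Lb)) > 0" using vs e by (simp add: support_of_def)
  ultimately show False by simp
qed

lemma AE_all_in:
  assumes ps: "prob_space N" and sN: "sets N = sets borel" and fI: "finite I"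
    and m: "measure N S = 1" and S: "S \<in> sets borel"
  shows "AE w in PiM I (\<lambda>_. N). \<forall>j\<in>I. w j \<in> S"
proof (rule AE_finite_allI[OF fI])
  fix j assume j: "j \<in> I"
  interpret prob_space N by (rule ps)
  have "AE x in N. x \<in> S" using m S sN by (subst AE_in_set_eq_1) auto
  then show "AE w in PiM I (\<lambda>_. N). w j \<in> S"
    by (rule AE_PiM_component[where M="\<lambda>_. N", OF ps j])
qed

theorem proposition1:
  fixes n T :: nat and \<alpha> :: "nat \<Rightarrow> real" and F :: "itype \<Rightarrow> real measure"
    and Lbar Hlow rL rH \<rho> :: real
  assumes T: "T > 1"
    and alpha: "\<forall>j<n. 0 \<le> \<alpha> j \<and> \<alpha> j \<le> 1"
    and two: "card {j. j < n \<and> \<alpha> j = 1} \<ge> 2"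
    and probF: "\<forall>s. prob_space (F s)"
    and setsF: "\<forall>s. sets (F s) = sets borel"
    and suppL: "measure (F L) {0..<Lbar} = 1"
    and suppH: "measure (F H) {Hlow..} = 1"
    and LH: "Lbar < Hlow"
    and r: "rL < rH"
    and rho: "Lbar < \<rho>" "\<rho> < Hlow"
  shows "\<forall>i<n. \<forall>s. \<forall>v \<in> support_of (F s).
           best_response n \<alpha> F s T \<rho> rL rH i v truthful"
proof (intro allI impI ballI)
  fix i s v assume i: "i < n" and v: "v \<in> support_of (F s)"
  interpret ctx n \<alpha> \<rho> rL rH i v using i by unfold_locales
  define I where "I = {..<n} - {i}"
  define M where "M = PiM I (\<lambda>_. F s)"
  have fI: "finite I" by (simp add: I_def)
  interpret P: prob_space M unfolding M_def using probF by (intro prob_space_PiM) auto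
  have comp: "(\<lambda>w. w j) \<in> borel_measurable M" if "j < n" "j \<noteq> i" for j
  proof -
    have "j \<in> I" using that by (simp add: I_def)
    then have "(\<lambda>w. w j) \<in> M \<rightarrow>\<^sub>M F s" unfolding M_def by (rule measurable_component_singleton)
    moreover have "measurable M (F s) = borel_measurable M"
      by (rule measurable_cong_sets) (simp_all add: setsF)
    ultimately show ?thesis by simp
  qed
  let ?f2 = "\<lambda>w. TV T False w"
  let ?B = "\<bar>v\<bar> + \<bar>rL\<bar> + \<bar>rH\<bar>"
  have int2: "integrable M ?f2"
  proof (rule P.integrable_const_bound[where B="real T * ?B"])
    show "AE w in M. norm (?f2 w) \<le> real T * ?B"
      using TV_bounds[of T False] by (auto intro!: AE_I2)
    show "?f2 \<in> borel_measurable M" by (rule TV_meas[OF comp])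
  qed
  have nn2: "0 \<le> integral\<^sup>L M ?f2"
    using TV_bounds[of T False] by (intro integral_nonneg_AE) (auto intro!: AE_I2)
  have le_AE: "AE w in M. measure_pmf.expectation (play n \<alpha> \<rho> rL rH i v \<sigma> w T False []) (\<lambda>u. u) \<le> ?f2 w"
    for \<sigma>
  proof (cases s)
    case L
    have vle: "v \<le> \<rho>" using support_le[OF probF[rule_format] setsF[rule_format] suppL] v L rho
      by force
    have "AE w in M. \<forall>j\<in>I. w j \<in> {0..<Lbar}"
      unfolding M_def using L probF setsF suppL fI by (intro AE_all_in) auto
    then show ?thesis
    proof (rule AE_mp, intro AE_I2 impI)
      fix w assume "\<forall>j\<in>I. w j \<in> {0..<Lbar}"
      then have wle: "\<forall>j<n. j \<noteq> i \<longrightarrow> w j \<le> \<rho>" using rho by (force simp: I_def)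
      show "measure_pmf.expectation (play n \<alpha> \<rho> rL rH i v \<sigma> w T False []) (\<lambda>u. u) \<le> ?f2 w"
        by (rule main_le) (rule mono_L[OF vle wle], use r in simp)
    qed
  next
    case H
    have "card ({j. j < n \<and> \<alpha> j = 1} - {i}) \<ge> 1"
      using two by (simp add: card_Diff_singleton_if split: if_splits) linarith
    then have "{j. j < n \<and> \<alpha> j = 1} - {i} \<noteq> {}" by (metis card.empty not_one_le_zero)
    then obtain j0 where j0: "j0 < n" "\<alpha> j0 = 1" "j0 \<noteq> i" by blast
    have "AE w in M. \<forall>j\<in>I. w j \<in> {Hlow..}"
      unfolding M_def using H probF setsF suppH fI by (intro AE_all_in) auto
    then show ?thesis
    proof (rule AE_mp, intro AE_I2 impI)
      fix w assume "\<forall>j\<in>I. w j \<in> {Hlow..}"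
      then have "w j0 > \<rho>" using j0 rho by (force simp: I_def)
      then show "measure_pmf.expectation (play n \<alpha> \<rho> rL rH i v \<sigma> w T False []) (\<lambda>u. u) \<le> ?f2 w"
        by (intro main_le mono_H[OF j0(1,3,2)])
    qed
  qed
  show "best_response n \<alpha> F s T \<rho> rL rH i v truthful"
    unfolding best_response_def
  proof
    fix \<sigma>
    have e2: "exp_util n \<alpha> F s T \<rho> rL rH i v truthful = integral\<^sup>L M ?f2"
      unfolding exp_util_def M_def I_def by (simp add: tr_eq)
    show "exp_util n \<alpha> F s T \<rho> rL rH i v \<sigma> \<le> exp_util n \<alpha> F s T \<rho> rL rH i v truthful"
    proof (cases "integrable M (\<lambda>w. measure_pmf.expectation (play n \<alpha> \<rho> rL rH i v \<sigma> w T False []) (\<lambda>u. u))")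
      case True
      then show ?thesis unfolding e2 unfolding exp_util_def M_def[symmetric] I_def[symmetric]
        by (intro integral_mono_AE[OF _ int2 le_AE])
    next
      case False
      then show ?thesis unfolding e2 unfolding exp_util_def M_def[symmetric] I_def[symmetric]
        using nn2 by (simp add: not_integrable_integral_eq)
    qed
  qed
qed


end
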